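(* Let $n\ge m\ge1$. Then for all Banach spaces $X,Y$ and all bounded linear operators $T:X\to Y$, $$\tau(T|\mathcal H(\mathbb D_{m+1}^{n+1}))\le\tau(T|\mathcal H(\mathbb D_m^n)).$$
   Context: Dyadic intervals: $\Delta_k^{(j)}:=[\frac{j-1}{2^k},\frac{j}{2^k})$. Haar functions: for $k\ge1$, integer $j$, $\chi_k^{(j)}(t)=+2^{(k-1)/2}$ on $\Delta_k^{(2j-1)}$, $-2^{(k-1)/2}$ on $\Delta_k^{(2j)}$, $0$ otherwise, $t\in[0,1)$. $\mathbb D_m^n:=\{(k,j):k=m,\dots,n;\ j=1,\dots,2^{k-1}\}$. For a finite set $\mathbb F$ of such indices and bounded linear $T:X\to Y$, $\tau(T|\mathcal H(\mathbb F))$ is the least $c\ge0$ such that $\|\sum_{(k,j)\in\mathbb F}Tx_k^{(j)}\chi_k^{(j)}|L_2\|\le c(\sum_{(k,j)\in\mathbb F}\|x_k^{(j)}\|^2)^{1/2}$ for all $x_k^{(j)}\in X$, where $\|\cdot|L_2\|$ is the Bochner $L_2([0,1),Y)$ norm. *)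

theory Defs
  imports "HOL-Analysis.Analysis"
begin

definition dyadic_interval :: "nat \<Rightarrow> int \<Rightarrow> real set" where
  "dyadic_interval k j = {(real_of_int j - 1) / 2 ^ k ..< real_of_int j / 2 ^ k}"

definition haar :: "nat \<Rightarrow> int \<Rightarrow> real \<Rightarrow> real" where
  "haar k j t =
     (if t \<in> {0..<1} \<and> t \<in> dyadic_interval k (2 * j - 1) then 2 powr ((real k - 1) / 2)
      else if t \<in> {0..<1} \<and> t \<in> dyadic_interval k (2 * j) then - (2 powr ((real k - 1) / 2))
      else 0)"

definition dyadic_index :: "nat \<Rightarrow> nat \<Rightarrow> (nat \<times> int) set" where
  "dyadic_index m n = {(k, j). m \<le> k \<and> k \<le> n \<and> 1 \<le> j \<and> j \<le> 2 ^ (k - 1)}"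

definition L2_norm01 :: "(real \<Rightarrow> 'b::real_normed_vector) \<Rightarrow> real" where
  "L2_norm01 f = sqrt (LINT t : {0..<1} | lborel. (norm (f t))\<^sup>2)"

definition haar_tau :: "('a::real_normed_vector \<Rightarrow> 'b::real_normed_vector) \<Rightarrow> (nat \<times> int) set \<Rightarrow> real" where
  "haar_tau T F = Inf {c. 0 \<le> c \<and>
     (\<forall>x :: nat \<times> int \<Rightarrow> 'a.
        L2_norm01 (\<lambda>t. \<Sum>(k, j)\<in>F. haar k j t *\<^sub>R T (x (k, j)))
          \<le> c * sqrt (\<Sum>(k, j)\<in>F. (norm (x (k, j)))\<^sup>2))}"

end

theory Submission
  imports Defs
begin


lemma haar_out: "t \<notin> {0..<1} \<Longrightarrow> haar k j t = 0"
  by (auto simp add: haar_def)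

lemma haar_abs: "\<bar>haar k j t\<bar> \<le> 2 powr ((real k - 1) / 2)"
  by (simp add: haar_def)

lemma powr_shift: "(2::real) powr ((real (k+1) - 1) / 2) = sqrt 2 * 2 powr ((real k - 1) / 2)"
proof -
  have "(real (k+1) - 1) / 2 = 1/2 + (real k - 1) / 2" by (simp add: field_simps)
  then show ?thesis by (metis powr_add powr_half_sqrt zero_le_numeral)
qed

lemma pow_k: assumes "1 \<le> k" shows "(2::int) ^ k = 2 * 2 ^ (k - 1)"
  using assms by (metis power_Suc Suc_diff_1 less_le_trans zero_less_one)

lemma haar_lower:
  assumes "1 \<le> k" "1 \<le> j" "j \<le> 2 ^ (k - 1)"
  shows "haar (k+1) j t = sqrt 2 * haar k j (2 * t)"
proof -
  define p :: real where "p = 2 ^ k"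
  have p: "p > 0" by (simp add: p_def)
  have pk: "(2::real) ^ (k+1) = 2 * p" "(2::real) ^ k = p" by (simp_all add: p_def)
  have jp: "2 * real_of_int j \<le> p"
  proof -
    have "2 * j \<le> 2 ^ k" using assms pow_k by simp
    then have "real_of_int (2*j) \<le> real_of_int (2^k)" by linarith
    then show ?thesis by (simp add: p_def)
  qed
  have j1: "1 \<le> real_of_int j" using assms by simp
  obtain u where u: "t = u / p" using p by (metis nonzero_mult_div_cancel_left less_irrefl)
  show ?thesis
    unfolding haar_def dyadic_interval_def powr_shift pk u
    using p jp j1
    by (auto simp: field_simps)
qed


lemma div_interval: "0 < (c::real) \<Longrightarrow> (x/c \<in> {a/c..<b/c}) = (a \<le> x \<and> x < b)"
  by (simp add: divide_le_cancel divide_less_cancel)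

lemma haar_upper:
  assumes "1 \<le> k" "1 \<le> j" "j \<le> 2 ^ (k - 1)"
  shows "haar (k+1) (j + 2 ^ (k - 1)) t = sqrt 2 * haar k j (2 * t - 1)"
proof -
  define p :: real where "p = 2 ^ k"
  have p: "p > 0" by (simp add: p_def)
  have pk: "(2::real) ^ (k+1) = 2 * p" "(2::real) ^ k = p" by (simp_all add: p_def)
  have q: "real_of_int (2 ^ (k-1)) = p / 2"
  proof -
    have "real_of_int (2 ^ k) = real_of_int (2 * 2 ^ (k-1))" using pow_k[OF assms(1)] by simp
    then show ?thesis by (simp add: p_def)
  qed
  have jp: "2 * real_of_int j \<le> p"
  proof -
    have "2 * j \<le> 2 ^ k" using assms pow_k by simp
    then have "real_of_int (2*j) \<le> real_of_int (2^k)" by linarith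
    then show ?thesis by (simp add: p_def)
  qed
  have j1: "1 \<le> real_of_int j" using assms by simp
  have "t = ((2*p*t - p) + p) / (2 * p)" using p by simp
  then obtain u where u: "t = (u + p) / (2 * p)" by blast
  have u2: "2 * ((u + p) / (2 * p)) - 1 = u / p" using p by (simp add: field_simps)
  have e: "real_of_int (2 * (j + 2 ^ (k - 1)) - 1) = 2 * real_of_int j + p - 1"
          "real_of_int (2 * (j + 2 ^ (k - 1))) = 2 * real_of_int j + p"
    using q by simp_all
  show ?thesis
    unfolding haar_def dyadic_interval_def powr_shift pk u e u2
    apply (simp only: div_interval p mult_pos_pos[OF _ p] zero_less_numeral)
    using p jp j1
    by (auto simp: field_simps)
qed

lemma dyadic_split:
  assumes "1 \<le> m"
  shows "dyadic_index (m+1) (n+1) =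
     (\<lambda>(k,j). (k+1, j)) ` dyadic_index m n \<union> (\<lambda>(k,j). (k+1, j + 2^(k-1))) ` dyadic_index m n"
    (is "?L = ?A \<union> ?B")
proof
  show "?L \<subseteq> ?A \<union> ?B"
  proof
    fix p assume "p \<in> ?L"
    then obtain k j where p: "p = (k,j)" and h: "m+1 \<le> k" "k \<le> n+1" "1 \<le> j" "j \<le> 2^(k-1)"
      by (auto simp: dyadic_index_def)
    define k' where "k' = k - 1"
    have k: "k = k' + 1" "1 \<le> k'" using h assms by (auto simp: k'_def)
    have pk: "(2::int)^(k-1) = 2 * 2^(k'-1)" using k pow_k by simp
    show "p \<in> ?A \<union> ?B"
    proof (cases "j \<le> 2^(k'-1)")
      case True
      then have "(k', j) \<in> dyadic_index m n" using h k by (auto simp: dyadic_index_def)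
      then show ?thesis using p k by force
    next
      case False
      then have "(k', j - 2^(k'-1)) \<in> dyadic_index m n" using h k pk by (auto simp: dyadic_index_def)
      moreover have "p = (\<lambda>(k,j). (k+1, j + 2^(k-1))) (k', j - 2^(k'-1))" using p k by simp
      ultimately show ?thesis by blast
    qed
  qed
next
  show "?A \<union> ?B \<subseteq> ?L"
  proof
    fix p assume "p \<in> ?A \<union> ?B"
    then obtain k j where h: "m \<le> k" "k \<le> n" "1 \<le> j" "j \<le> 2^(k-1)"
      and p: "p = (k+1, j) \<or> p = (k+1, j + 2^(k-1))"
      by (auto simp: dyadic_index_def)
    have pk: "(2::int)^k = 2 * 2^(k-1)" using h assms pow_k by simp
    show "p \<in> ?L" using p h pk by (auto simp: dyadic_index_def)
  qed
qed

lemma dyadic_finite: "finite (dyadic_index m n)"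
proof -
  have "dyadic_index m n \<subseteq> {m..n} \<times> {1..2^(n-1)}"
  proof
    fix p assume "p \<in> dyadic_index m n"
    then obtain k j where p: "p = (k,j)" "m \<le> k" "k \<le> n" "1 \<le> j" "j \<le> (2::int)^(k-1)"
      by (auto simp: dyadic_index_def)
    have "(2::int)^(k-1) \<le> 2^(n-1)" using p by (intro power_increasing) auto
    then have "j \<le> 2^(n-1)" using p(5) by linarith
    then show "p \<in> {m..n} \<times> {1..2^(n-1)}" using p by auto
  qed
  then show ?thesis by (rule finite_subset) auto
qed

lemma dyadic_sum:
  assumes "1 \<le> m"
  shows "(\<Sum>p\<in>dyadic_index (m+1) (n+1). f p) =
     (\<Sum>(k,j)\<in>dyadic_index m n. f (k+1, j)) + (\<Sum>(k,j)\<in>dyadic_index m n. f (k+1, j + 2^(k-1)))"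
proof -
  let ?F = "dyadic_index m n"
  have inj1: "inj_on (\<lambda>(k,j). (k+1, j)) ?F" by (auto simp: inj_on_def)
  have inj2: "inj_on (\<lambda>(k::nat,j::int). (k+1, j + 2^(k-1))) ?F" by (auto simp: inj_on_def)
  have disj: "(\<lambda>(k,j). (k+1, j)) ` ?F \<inter> (\<lambda>(k,j). (k+1, j + 2^(k-1))) ` ?F = {}"
    by (auto simp: dyadic_index_def)
  show ?thesis
    unfolding dyadic_split[OF assms]
    apply (subst sum.union_disjoint)
    using dyadic_finite disj apply auto[3]
    apply (subst sum.reindex[OF inj1])
    apply (subst sum.reindex[OF inj2])
    apply (simp add: case_prod_unfold)
    done
qed


lemma hsum_out: "t \<notin> {0..<1} \<Longrightarrow> (\<Sum>(k, j)\<in>F. haar k j t *\<^sub>R w (k, j)) = (0::'b::real_normed_vector)"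
  by (simp add: haar_out case_prod_unfold)

lemma L2_alt:
  fixes f :: "real \<Rightarrow> 'b::real_normed_vector"
  assumes "\<And>t. t \<notin> {0..<1} \<Longrightarrow> f t = 0"
  shows "L2_norm01 f = sqrt (\<integral>t. (norm (f t))\<^sup>2 \<partial>lborel)"
proof -
  have "(\<lambda>t. indicator {0..<1} t *\<^sub>R (norm (f t))\<^sup>2) = (\<lambda>t. (norm (f t))\<^sup>2)"
    apply (rule ext) subgoal for t using assms[of t] by (cases "t \<in> {0..<1}") auto done
  then show ?thesis unfolding L2_norm01_def set_lebesgue_integral_def by simp
qed

lemma int_le_sq:
  fixes H :: "real \<Rightarrow> real"
  assumes "\<And>t. H t \<le> indicator {0..<1} t * B\<^sup>2"
  shows "(\<integral>t. H t \<partial>lborel) \<le> B\<^sup>2"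
proof (cases "integrable lborel H")
  case True
  have i: "integrable lborel (\<lambda>t::real. indicator {0..<1} t * B\<^sup>2)"
  proof -
    have e: "emeasure lborel {0..<1::real} < top" by simp
    have ii: "integrable lborel (indicat_real {0..<1::real})"
      unfolding integrable_indicator_iff using e by simp
    then show ?thesis by simp
  qed
  have "(\<integral>t. H t \<partial>lborel) \<le> (\<integral>t. indicator {0..<1::real} t * B\<^sup>2 \<partial>lborel)"
    by (rule integral_mono[OF True i]) (use assms in auto)
  also have "\<dots> = B\<^sup>2" by simp
  finally show ?thesis .
next
  case False
  then show ?thesis by (simp add: not_integrable_integral_eq)
qed

lemma nonempty_bound:
  fixes T :: "'a::real_normed_vector \<Rightarrow> 'b::real_normed_vector"
  assumes "finite F" "bounded_linear T"
  shows "\<exists>c. 0 \<le> c \<and> (\<forall>x :: nat \<times> int \<Rightarrow> 'a.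
        L2_norm01 (\<lambda>t. \<Sum>(k, j)\<in>F. haar k j t *\<^sub>R T (x (k, j)))
          \<le> c * sqrt (\<Sum>(k, j)\<in>F. (norm (x (k, j)))\<^sup>2))"
proof -
  obtain K where K: "K > 0" "\<And>v. norm (T v) \<le> norm v * K"
    using bounded_linear.pos_bounded[OF assms(2)] by blast
  define c where "c = (\<Sum>(k, j)\<in>F. 2 powr ((real k - 1) / 2)) * K"
  have c0: "0 \<le> c" unfolding c_def using K
    by (intro mult_nonneg_nonneg sum_nonneg) (auto simp: case_prod_unfold)
  show ?thesis
  proof (intro exI conjI allI)
    show "0 \<le> c" by (fact c0)
    fix x :: "nat \<times> int \<Rightarrow> 'a"
    define S where "S = (\<Sum>(k, j)\<in>F. (norm (x (k, j)))\<^sup>2)"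
    define f where "f = (\<lambda>t. \<Sum>(k, j)\<in>F. haar k j t *\<^sub>R T (x (k, j)))"
    have S0: "0 \<le> S" unfolding S_def by (auto intro!: sum_nonneg simp: case_prod_unfold)
    have xs: "norm (x p) \<le> sqrt S" if "p \<in> F" for p
    proof (rule real_le_rsqrt)
      have "(norm (x p))\<^sup>2 = (\<lambda>(k, j). (norm (x (k, j)))\<^sup>2) p" by (simp add: case_prod_unfold)
      also have "\<dots> \<le> S" unfolding S_def
        by (rule member_le_sum[OF that _ assms(1)]) (simp add: case_prod_unfold)
      finally show "(norm (x p))\<^sup>2 \<le> S" .
    qed
    have pt: "norm (f t) \<le> c * sqrt S" for t
    proof -
      have "norm (f t) \<le> (\<Sum>p\<in>F. norm (haar (fst p) (snd p) t *\<^sub>R T (x p)))"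
        unfolding f_def case_prod_unfold prod.collapse by (rule norm_sum)
      also have "\<dots> \<le> (\<Sum>p\<in>F. 2 powr ((real (fst p) - 1) / 2) * (sqrt S * K))"
      proof (rule sum_mono)
        fix p assume p: "p \<in> F"
        have "norm (haar (fst p) (snd p) t *\<^sub>R T (x p)) = \<bar>haar (fst p) (snd p) t\<bar> * norm (T (x p))"
          by simp
        also have "\<dots> \<le> 2 powr ((real (fst p) - 1) / 2) * (sqrt S * K)"
        proof (rule mult_mono)
          show "norm (T (x p)) \<le> sqrt S * K"
            using K(2)[of "x p"] xs[OF p] K(1) by (meson mult_right_mono less_imp_le order_trans)
        qed (auto simp: haar_abs)
        finally show "norm (haar (fst p) (snd p) t *\<^sub>R T (x p)) \<le> 2 powr ((real (fst p) - 1) / 2) * (sqrt S * K)" .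
      qed
      also have "\<dots> = c * sqrt S" unfolding c_def case_prod_unfold sum_distrib_right
        by (simp add: mult_ac)
      finally show ?thesis .
    qed
    have "L2_norm01 f = sqrt (\<integral>t. (norm (f t))\<^sup>2 \<partial>lborel)"
    proof (rule L2_alt)
      fix t :: real assume "t \<notin> {0..<1}"
      then show "f t = 0" unfolding f_def by (rule hsum_out)
    qed
    also have "\<dots> \<le> sqrt ((c * sqrt S)\<^sup>2)"
    proof (rule real_sqrt_le_mono, rule int_le_sq)
      fix t
      show "(norm (f t))\<^sup>2 \<le> indicator {0..<1} t * (c * sqrt S)\<^sup>2"
      proof (cases "t \<in> {0..<1}")
        case True
        then show ?thesis using pt[of t] by (simp add: power_mono)
      next
        case False
        have "f t = 0" unfolding f_def using False by (rule hsum_out)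
        then show ?thesis using False by simp
      qed
    qed
    also have "\<dots> = c * sqrt S" using c0 S0 by simp
    finally show "L2_norm01 (\<lambda>t. \<Sum>(k, j)\<in>F. haar k j t *\<^sub>R T (x (k, j))) \<le> c * sqrt S"
      unfolding f_def .
  qed
qed


lemma key:
  fixes T :: "'a::real_normed_vector \<Rightarrow> 'b::real_normed_vector" and c :: real
  assumes m1: "1 \<le> m" and c0: "0 \<le> c"
    and hyp: "\<forall>x :: nat \<times> int \<Rightarrow> 'a.
        L2_norm01 (\<lambda>t. \<Sum>(k, j)\<in>dyadic_index m n. haar k j t *\<^sub>R T (x (k, j)))
          \<le> c * sqrt (\<Sum>(k, j)\<in>dyadic_index m n. (norm (x (k, j)))\<^sup>2)"
  shows "L2_norm01 (\<lambda>t. \<Sum>(k, j)\<in>dyadic_index (m+1) (n+1). haar k j t *\<^sub>R T (x (k, j)))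
          \<le> c * sqrt (\<Sum>(k, j)\<in>dyadic_index (m+1) (n+1). (norm (x (k, j)))\<^sup>2)"
proof -
  let ?F = "dyadic_index m n" and ?F' = "dyadic_index (m+1) (n+1)"
  define y1 :: "nat \<times> int \<Rightarrow> 'a" where "y1 = (\<lambda>(k,j). x (k+1, j))"
  define y2 :: "nat \<times> int \<Rightarrow> 'a" where "y2 = (\<lambda>(k,j). x (k+1, j + 2^(k-1)))"
  define g1 where "g1 = (\<lambda>t. \<Sum>(k, j)\<in>?F. haar k j t *\<^sub>R T (y1 (k, j)))"
  define g2 where "g2 = (\<lambda>t. \<Sum>(k, j)\<in>?F. haar k j t *\<^sub>R T (y2 (k, j)))"
  define f where "f = (\<lambda>t. \<Sum>(k, j)\<in>?F'. haar k j t *\<^sub>R T (x (k, j)))"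
  define S1 where "S1 = (\<Sum>(k, j)\<in>?F. (norm (y1 (k, j)))\<^sup>2)"
  define S2 where "S2 = (\<Sum>(k, j)\<in>?F. (norm (y2 (k, j)))\<^sup>2)"
  define S where "S = (\<Sum>(k, j)\<in>?F'. (norm (x (k, j)))\<^sup>2)"
  have SS: "S = S1 + S2"
    unfolding S_def S1_def S2_def y1_def y2_def
    using dyadic_sum[OF m1, of "\<lambda>(k,j). (norm (x (k, j)))\<^sup>2" n] by simp
  have S1pos: "0 \<le> S1" "0 \<le> S2" unfolding S1_def S2_def
    by (auto intro!: sum_nonneg simp: case_prod_unfold)
  have g1o: "g1 s = 0" if "s \<notin> {0..<1}" for s unfolding g1_def using that by (rule hsum_out)
  have g2o: "g2 s = 0" if "s \<notin> {0..<1}" for s unfolding g2_def using that by (rule hsum_out)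
  have fo: "f s = 0" if "s \<notin> {0..<1}" for s unfolding f_def using that by (rule hsum_out)
  have fsplit: "f t = sqrt 2 *\<^sub>R (g1 (2*t) + g2 (2*t - 1))" for t
  proof -
    have "f t = (\<Sum>(k, j)\<in>?F. haar (k+1) j t *\<^sub>R T (x (k+1, j)))
             + (\<Sum>(k, j)\<in>?F. haar (k+1) (j + 2^(k-1)) t *\<^sub>R T (x (k+1, j + 2^(k-1))))"
      unfolding f_def using dyadic_sum[OF m1, of "\<lambda>(k,j). haar k j t *\<^sub>R T (x (k, j))" n]
      by simp
    also have "(\<Sum>(k, j)\<in>?F. haar (k+1) j t *\<^sub>R T (x (k+1, j))) = sqrt 2 *\<^sub>R g1 (2*t)"
      unfolding g1_def scaleR_sum_right
      by (rule sum.cong) (use m1 in \<open>auto simp: haar_lower[simplified] y1_def dyadic_index_def\<close>)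
    also have "(\<Sum>(k, j)\<in>?F. haar (k+1) (j + 2^(k-1)) t *\<^sub>R T (x (k+1, j + 2^(k-1)))) = sqrt 2 *\<^sub>R g2 (2*t - 1)"
      unfolding g2_def scaleR_sum_right
      by (rule sum.cong) (use m1 in \<open>auto simp: haar_upper[simplified] y2_def dyadic_index_def\<close>)
    finally show ?thesis by (simp add: scaleR_add_right)
  qed
  define G1 where "G1 = (\<lambda>s. (norm (g1 s))\<^sup>2)"
  define G2 where "G2 = (\<lambda>s. (norm (g2 s))\<^sup>2)"
  define H where "H = (\<lambda>t. (norm (f t))\<^sup>2)"
  have Hsplit: "H t = 2 * G1 (2*t) + 2 * G2 (2*t - 1)" for t
  proof (cases "t < 1/2")
    case True
    then have "g2 (2*t - 1) = 0" by (intro g2o) auto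
    then show ?thesis unfolding H_def G1_def G2_def fsplit by (simp add: power_mult_distrib)
  next
    case False
    then have "g1 (2*t) = 0" by (intro g1o) auto
    then show ?thesis unfolding H_def G1_def G2_def fsplit by (simp add: power_mult_distrib)
  qed
  have H1: "2 * G1 (2*t) = H t * indicator {..<1/2} t" for t
  proof (cases "t < 1/2")
    case True
    then have "g2 (2*t - 1) = 0" by (intro g2o) auto
    then show ?thesis using True unfolding Hsplit G2_def by simp
  next
    case False
    then have "g1 (2*t) = 0" by (intro g1o) auto
    then show ?thesis using False unfolding G1_def by simp
  qed
  have aff1: "integral\<^sup>L lborel G1 = (\<integral>t. 2 * G1 (2*t) \<partial>lborel)"
    using lborel_integral_real_affine[of 2 G1 0] by simp
  have aff2: "integral\<^sup>L lborel G2 = (\<integral>t. 2 * G2 (2*t - 1) \<partial>lborel)"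
    using lborel_integral_real_affine[of 2 G2 "-1"] by (simp add: algebra_simps)
  have nG1: "0 \<le> integral\<^sup>L lborel G1" "0 \<le> integral\<^sup>L lborel G2"
    unfolding G1_def G2_def by simp_all
  have intH: "integral\<^sup>L lborel H \<le> integral\<^sup>L lborel G1 + integral\<^sup>L lborel G2"
  proof (cases "integrable lborel H")
    case True
    have i1: "integrable lborel (\<lambda>t. 2 * G1 (2*t))"
      unfolding H1 by (rule integrable_real_mult_indicator[OF _ True]) simp
    have "integrable lborel (\<lambda>t. H t - 2 * G1 (2*t))" using True i1 by simp
    then have i2: "integrable lborel (\<lambda>t. 2 * G2 (2*t - 1))" unfolding Hsplit by simp
    have "integral\<^sup>L lborel H = (\<integral>t. 2 * G1 (2*t) + 2 * G2 (2*t - 1) \<partial>lborel)"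
      unfolding Hsplit[abs_def] ..
    also have "\<dots> = integral\<^sup>L lborel G1 + integral\<^sup>L lborel G2"
      using Bochner_Integration.integral_add[OF i1 i2] aff1 aff2 by simp
    finally show ?thesis by simp
  next
    case False
    then show ?thesis using nG1 by (simp add: not_integrable_integral_eq)
  qed
  have L1: "sqrt (integral\<^sup>L lborel G1) \<le> c * sqrt S1"
  proof -
    have "L2_norm01 g1 = sqrt (integral\<^sup>L lborel G1)"
      unfolding G1_def by (rule L2_alt) (rule g1o)
    moreover have "L2_norm01 g1 \<le> c * sqrt S1"
      using hyp unfolding g1_def S1_def by blast
    ultimately show ?thesis by simp
  qed
  have L2: "sqrt (integral\<^sup>L lborel G2) \<le> c * sqrt S2"
  proof -
    have "L2_norm01 g2 = sqrt (integral\<^sup>L lborel G2)"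
      unfolding G2_def by (rule L2_alt) (rule g2o)
    moreover have "L2_norm01 g2 \<le> c * sqrt S2"
      using hyp unfolding g2_def S2_def by blast
    ultimately show ?thesis by simp
  qed
  have sq: "a \<le> c\<^sup>2 * s" if "0 \<le> a" "0 \<le> s" "sqrt a \<le> c * sqrt s" for a s
  proof -
    have "(sqrt a)\<^sup>2 \<le> (c * sqrt s)\<^sup>2" using that by (intro power_mono) auto
    then show ?thesis using that by (simp add: power_mult_distrib)
  qed
  have "integral\<^sup>L lborel H \<le> c\<^sup>2 * S1 + c\<^sup>2 * S2"
    using intH sq[OF nG1(1) S1pos(1) L1] sq[OF nG1(2) S1pos(2) L2] by linarith
  then have hS: "integral\<^sup>L lborel H \<le> (c * sqrt S)\<^sup>2"
    using SS S1pos by (simp add: power_mult_distrib distrib_left)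
  have "L2_norm01 f = sqrt (integral\<^sup>L lborel H)"
    unfolding H_def by (rule L2_alt) (rule fo)
  also have "\<dots> \<le> sqrt ((c * sqrt S)\<^sup>2)" using hS by (rule real_sqrt_le_mono)
  also have "\<dots> = c * sqrt S" using c0 SS S1pos by simp
  finally show ?thesis unfolding f_def S_def .
qed

theorem proposition3p1:
  fixes T :: "'a::banach \<Rightarrow> 'b::banach" and m n :: nat
  assumes "1 \<le> m" and "m \<le> n" and "bounded_linear T"
  shows "haar_tau T (dyadic_index (m + 1) (n + 1)) \<le> haar_tau T (dyadic_index m n)"
  unfolding haar_tau_def
proof (rule cInf_superset_mono)
  show "{c. 0 \<le> c \<and> (\<forall>x :: nat \<times> int \<Rightarrow> 'a.
        L2_norm01 (\<lambda>t. \<Sum>(k, j)\<in>dyadic_index m n. haar k j t *\<^sub>R T (x (k, j)))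
          \<le> c * sqrt (\<Sum>(k, j)\<in>dyadic_index m n. (norm (x (k, j)))\<^sup>2))} \<noteq> {}"
    using nonempty_bound[OF dyadic_finite assms(3), of m n] by blast
  show "bdd_below {c. 0 \<le> c \<and> (\<forall>x :: nat \<times> int \<Rightarrow> 'a.
        L2_norm01 (\<lambda>t. \<Sum>(k, j)\<in>dyadic_index (m+1) (n+1). haar k j t *\<^sub>R T (x (k, j)))
          \<le> c * sqrt (\<Sum>(k, j)\<in>dyadic_index (m+1) (n+1). (norm (x (k, j)))\<^sup>2))}"
    by (rule bdd_belowI[where m=0]) blast
  show "{c. 0 \<le> c \<and> (\<forall>x :: nat \<times> int \<Rightarrow> 'a.
        L2_norm01 (\<lambda>t. \<Sum>(k, j)\<in>dyadic_index m n. haar k j t *\<^sub>R T (x (k, j)))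
          \<le> c * sqrt (\<Sum>(k, j)\<in>dyadic_index m n. (norm (x (k, j)))\<^sup>2))}
      \<subseteq> {c. 0 \<le> c \<and> (\<forall>x :: nat \<times> int \<Rightarrow> 'a.
        L2_norm01 (\<lambda>t. \<Sum>(k, j)\<in>dyadic_index (m+1) (n+1). haar k j t *\<^sub>R T (x (k, j)))
          \<le> c * sqrt (\<Sum>(k, j)\<in>dyadic_index (m+1) (n+1). (norm (x (k, j)))\<^sup>2))}"
    using key[OF assms(1)] by blast
qed

end
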